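(* Let $V\subseteq\gamma_D$ be finite with $|V|\ge D+1$, let $T$ be a triangulation of $\mathrm{conv}(V)$ all of whose vertices lie in $V$, and let $\sigma\subseteq V$ be a $k$-simplex with $\lceil D/2\rceil\le k\le D$. If $T$ contains the $\lceil D/2\rceil$-dimensional skeleton of $\sigma$ (all faces of $\sigma$ of dimension at most $\lceil D/2\rceil$), then $\sigma\in T$.
   Context: $\gamma_D=\{(t,t^2,\dots,t^D):t\in\mathbb{R}\}$ is the moment curve in $\mathbb{R}^D$. A $k$-simplex on $\gamma_D$ is $\mathrm{conv}(\sigma)$ for $\sigma\subseteq\gamma_D$ with $|\sigma|=k+1$. A triangulation of a polytope is a geometric simplicial complex whose union is the polytope. *)

theory Defs
  imports "HOL-Analysis.Analysis"
begin

text \<open>Moment curve in R^D, D = CARD('n). Coordinates are indexed by a finite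
linearly ordered type; the i-th coordinate (in the order of 'n, counted from 1)
is t to the power i.\<close>
definition moment_point :: "real \<Rightarrow> real ^ 'n::{finite,linorder}" where
  "moment_point t = (\<chi> i. t ^ card {j. j \<le> i})"

definition moment_curve :: "(real ^ 'n::{finite,linorder}) set" where
  "moment_curve = range moment_point"

definition simplicial_complex :: "('a::euclidean_space) set set \<Rightarrow> bool" where
  "simplicial_complex T \<longleftrightarrow>
     (\<forall>\<sigma>\<in>T. finite \<sigma> \<and> \<sigma> \<noteq> {} \<and> \<not> affine_dependent \<sigma>) \<and>
     (\<forall>\<sigma>\<in>T. \<forall>\<tau>. \<tau> \<subseteq> \<sigma> \<and> \<tau> \<noteq> {} \<longrightarrow> \<tau> \<in> T) \<and>
     (\<forall>\<sigma>\<in>T. \<forall>\<tau>\<in>T. convex hull \<sigma> \<inter> convex hull \<tau> = convex hull (\<sigma> \<inter> \<tau>))"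

definition triangulation_of :: "('a::euclidean_space) set set \<Rightarrow> 'a set \<Rightarrow> bool" where
  "triangulation_of T P \<longleftrightarrow> simplicial_complex T \<and> \<Union>((\<lambda>\<sigma>. convex hull \<sigma>) ` T) = P"

end

theory Submission
  imports Defs "HOL-Computational_Algebra.Polynomial"
begin


lemma dich:
  fixes S :: "real set" and c :: "real \<Rightarrow> bool"
  assumes "finite S" "S \<noteq> {}"
  shows "(\<exists>p::real poly. degree p \<le> n \<and> (\<forall>x\<in>S. poly p x \<noteq> 0 \<and> (0 < poly p x \<longleftrightarrow> c x))
            \<and> (\<forall>t\<le>Min S. poly p t \<noteq> 0 \<and> (0 < poly p t \<longleftrightarrow> c (Min S))))
       \<or> (\<exists>a. (\<forall>i\<le>n. a i < a (Suc i)) \<and> (\<forall>i\<le>Suc n. a i \<in> S)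
            \<and> (\<forall>i\<le>n. c (a i) \<noteq> c (a (Suc i))) \<and> a 0 = Min S)"
  using assms
proof (induction "card S" arbitrary: S n rule: less_induct)
  case less
  define x where "x = Min S"
  define A where "A = S - {x}"
  have xS: "x \<in> S" using less x_def by simp
  have xle: "\<And>z. z \<in> S \<Longrightarrow> x \<le> z" using less x_def by simp
  show ?case
  proof (cases "A = {}")
    case True
    then have S: "S = {x}" using xS A_def by auto
    define p where "p = [:(if c x then 1 else -1::real):]"
    have "degree p \<le> n" by (simp add: p_def)
    moreover have "\<forall>z\<in>S. poly p z \<noteq> 0 \<and> (0 < poly p z \<longleftrightarrow> c z)" using S by (simp add: p_def)
    moreover have "\<forall>t\<le>Min S. poly p t \<noteq> 0 \<and> (0 < poly p t \<longleftrightarrow> c (Min S))" using S by (simp add: p_def)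
    ultimately show ?thesis by blast
  next
    case False
    have finA: "finite A" using less A_def by simp
    have cardA: "card A < card S" using less(2) A_def xS by (metis card_Diff1_less)
    define y where "y = Min A"
    have yA: "y \<in> A" using finA False y_def by simp
    have yle: "\<And>z. z \<in> A \<Longrightarrow> y \<le> z" using finA y_def by simp
    have xy: "x < y" using yA xle A_def by force
    have SA: "S = insert x A" using A_def xS by auto
    have IH: "\<And>m. (\<exists>p::real poly. degree p \<le> m \<and> (\<forall>z\<in>A. poly p z \<noteq> 0 \<and> (0 < poly p z \<longleftrightarrow> c z))
            \<and> (\<forall>t\<le>y. poly p t \<noteq> 0 \<and> (0 < poly p t \<longleftrightarrow> c y)))
       \<or> (\<exists>a. (\<forall>i\<le>m. a i < a (Suc i)) \<and> (\<forall>i\<le>Suc m. a i \<in> A)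
            \<and> (\<forall>i\<le>m. c (a i) \<noteq> c (a (Suc i))) \<and> a 0 = y)"
      using less(1)[OF cardA finA False] y_def by blast
    show ?thesis
    proof (cases "c x = c y")
      case True
      from IH[of n] show ?thesis
      proof
        assume "\<exists>p::real poly. degree p \<le> n \<and> (\<forall>z\<in>A. poly p z \<noteq> 0 \<and> (0 < poly p z \<longleftrightarrow> c z))
            \<and> (\<forall>t\<le>y. poly p t \<noteq> 0 \<and> (0 < poly p t \<longleftrightarrow> c y))"
        then obtain p :: "real poly" where p: "degree p \<le> n" "\<forall>z\<in>A. poly p z \<noteq> 0 \<and> (0 < poly p z \<longleftrightarrow> c z)"
            "\<forall>t\<le>y. poly p t \<noteq> 0 \<and> (0 < poly p t \<longleftrightarrow> c y)" by blast
        have "\<forall>z\<in>S. poly p z \<noteq> 0 \<and> (0 < poly p z \<longleftrightarrow> c z)" using p True xy SA by auto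
        moreover have "\<forall>t\<le>Min S. poly p t \<noteq> 0 \<and> (0 < poly p t \<longleftrightarrow> c (Min S))"
          using p True xy x_def[symmetric] by auto
        ultimately show ?thesis using p(1) by blast
      next
        assume "\<exists>a. (\<forall>i\<le>n. a i < a (Suc i)) \<and> (\<forall>i\<le>Suc n. a i \<in> A)
            \<and> (\<forall>i\<le>n. c (a i) \<noteq> c (a (Suc i))) \<and> a 0 = y"
        then obtain a where a: "\<forall>i\<le>n. a i < a (Suc i)" "\<forall>i\<le>Suc n. a i \<in> A"
            "\<forall>i\<le>n. c (a i) \<noteq> c (a (Suc i))" "a 0 = y" by blast
        define b where "b = a(0 := x)"
        have "\<forall>i\<le>n. b i < b (Suc i)" using a xy by (auto simp: b_def)
        moreover have "\<forall>i\<le>Suc n. b i \<in> S" using a xS SA by (auto simp: b_def)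
        moreover have "\<forall>i\<le>n. c (b i) \<noteq> c (b (Suc i))" using a True by (auto simp: b_def)
        moreover have "b 0 = Min S" by (simp add: b_def x_def)
        ultimately show ?thesis by blast
      qed
    next
      case False
      show ?thesis
      proof (cases n)
        case 0
        define b where "b = (\<lambda>i::nat. if i = 0 then x else y)"
        have "\<forall>i\<le>Suc n. b i \<in> S" using 0 xS yA SA by (auto simp: b_def le_Suc_eq)
        moreover have "\<forall>i\<le>n. b i < b (Suc i)" using 0 xy by (auto simp: b_def)
        moreover have "\<forall>i\<le>n. c (b i) \<noteq> c (b (Suc i))" using 0 False by (auto simp: b_def)
        moreover have "b 0 = Min S" by (simp add: b_def x_def)
        ultimately show ?thesis by blast
      next
        case (Suc m)
        from IH[of m] show ?thesis
        proof
          assume "\<exists>p::real poly. degree p \<le> m \<and> (\<forall>z\<in>A. poly p z \<noteq> 0 \<and> (0 < poly p z \<longleftrightarrow> c z))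
            \<and> (\<forall>t\<le>y. poly p t \<noteq> 0 \<and> (0 < poly p t \<longleftrightarrow> c y))"
          then obtain q :: "real poly" where q: "degree q \<le> m" "\<forall>z\<in>A. poly q z \<noteq> 0 \<and> (0 < poly q z \<longleftrightarrow> c z)"
            "\<forall>t\<le>y. poly q t \<noteq> 0 \<and> (0 < poly q t \<longleftrightarrow> c y)" by blast
          define z where "z = (x + y) / 2"
          define p where "p = q * [:-z, 1:]"
          have pe: "\<And>t. poly p t = poly q t * (t - z)" by (simp add: p_def algebra_simps)
          have "degree p \<le> n"
            using degree_mult_le[of q "[:-z, 1:]"] q(1) Suc by (simp add: p_def)
          moreover have pA: "\<forall>w\<in>A. poly p w \<noteq> 0 \<and> (0 < poly p w \<longleftrightarrow> c w)"
          proof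
            fix w assume w: "w \<in> A"
            have "w - z > 0" using yle[OF w] xy by (simp add: z_def)
            then show "poly p w \<noteq> 0 \<and> (0 < poly p w \<longleftrightarrow> c w)" using q(2) w
              by (simp add: pe zero_less_mult_iff)
          qed
          moreover have tx: "\<forall>t\<le>x. poly p t \<noteq> 0 \<and> (0 < poly p t \<longleftrightarrow> c x)"
          proof (intro allI impI)
            fix t assume t: "t \<le> x"
            have "t - z < 0" using t xy by (simp add: z_def)
            moreover have "poly q t \<noteq> 0 \<and> (0 < poly q t \<longleftrightarrow> c y)" using q(3) t xy by simp
            ultimately show "poly p t \<noteq> 0 \<and> (0 < poly p t \<longleftrightarrow> c x)" using False
              by (auto simp add: pe zero_less_mult_iff)
          qed
          moreover have "\<forall>w\<in>S. poly p w \<noteq> 0 \<and> (0 < poly p w \<longleftrightarrow> c w)"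
            using SA tx pA by blast
          moreover have "\<forall>t\<le>Min S. poly p t \<noteq> 0 \<and> (0 < poly p t \<longleftrightarrow> c (Min S))"
            using tx x_def by simp
          ultimately show ?thesis by blast
        next
          assume "\<exists>a. (\<forall>i\<le>m. a i < a (Suc i)) \<and> (\<forall>i\<le>Suc m. a i \<in> A)
            \<and> (\<forall>i\<le>m. c (a i) \<noteq> c (a (Suc i))) \<and> a 0 = y"
          then obtain a where a: "\<forall>i\<le>m. a i < a (Suc i)" "\<forall>i\<le>Suc m. a i \<in> A"
            "\<forall>i\<le>m. c (a i) \<noteq> c (a (Suc i))" "a 0 = y" by blast
          define b where "b = (\<lambda>i. if i = 0 then x else a (i - 1))"
          have "\<forall>i\<le>n. b i < b (Suc i)"
          proof (intro allI impI)
            fix i assume "i \<le> n"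
            then show "b i < b (Suc i)" using a xy Suc by (cases i) (auto simp: b_def)
          qed
          moreover have "\<forall>i\<le>Suc n. b i \<in> S"
          proof (intro allI impI)
            fix i assume "i \<le> Suc n"
            then show "b i \<in> S" using a xS SA Suc by (cases i) (auto simp: b_def)
          qed
          moreover have "\<forall>i\<le>n. c (b i) \<noteq> c (b (Suc i))"
          proof (intro allI impI)
            fix i assume "i \<le> n"
            then show "c (b i) \<noteq> c (b (Suc i))" using a False Suc by (cases i) (auto simp: b_def)
          qed
          moreover have "b 0 = Min S" by (simp add: b_def x_def)
          ultimately show ?thesis by blast
        qed
      qed
    qed
  qed
qed



definition rk :: "'n::{finite,linorder} \<Rightarrow> nat" where "rk i = card {j. j \<le> i}"

lemma rk_less: "(i::'n::{finite,linorder}) < i' \<Longrightarrow> rk i < rk i'"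
  unfolding rk_def by (rule psubset_card_mono) (auto simp: less_le_not_le)

lemma rk_inj: "inj (rk :: 'n::{finite,linorder} \<Rightarrow> nat)"
  by (metis injI linorder_neq_iff rk_less order_less_irrefl)

lemma rk_range: "rk ` (UNIV :: 'n::{finite,linorder} set) = {1..CARD('n)}"
proof -
  have sub: "rk ` (UNIV :: 'n set) \<subseteq> {1..CARD('n)}"
  proof
    fix k assume "k \<in> rk ` (UNIV :: 'n set)"
    then obtain i :: 'n where k: "k = rk i" by auto
    have "{j. j \<le> i} \<noteq> {}" by auto
    then have "1 \<le> rk i" unfolding rk_def by (simp add: Suc_le_eq card_gt_0_iff)
    moreover have "rk i \<le> CARD('n)" unfolding rk_def by (rule card_mono) auto
    ultimately show "k \<in> {1..CARD('n)}" using k by simp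
  qed
  have "card (rk ` (UNIV :: 'n set)) = CARD('n)" using card_image[OF rk_inj] by simp
  then show ?thesis using sub by (intro card_subset_eq) auto
qed

lemma mp_inner: "a \<bullet> (moment_point t :: real ^ 'n::{finite,linorder}) = (\<Sum>i\<in>UNIV. a$i * t ^ rk i)"
  by (simp add: inner_vec_def moment_point_def rk_def)

lemma aff_to_poly:
  fixes a :: "real ^ 'n::{finite,linorder}"
  shows "\<exists>g::real poly. degree g \<le> CARD('n) \<and> (\<forall>t. poly g t = a \<bullet> moment_point t + b)"
proof -
  define g where "g = [:b:] + (\<Sum>i\<in>UNIV. monom (a$i) (rk i))"
  have "degree (\<Sum>i\<in>UNIV. monom (a$i) (rk i)) \<le> CARD('n)"
  proof (rule degree_sum_le)
    fix i :: 'n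
    have "rk i \<le> CARD('n)" using rk_range by auto
    then show "degree (monom (a$i) (rk i)) \<le> CARD('n)" using degree_monom_le order_trans by blast
  qed auto
  then have "degree g \<le> CARD('n)" unfolding g_def
    using degree_add_le[of "[:b:]" "CARD('n)"] by simp
  moreover have "\<forall>t. poly g t = a \<bullet> moment_point t + b"
    by (simp add: g_def poly_sum poly_monom mp_inner)
  ultimately show ?thesis by blast
qed

lemma poly_to_aff:
  fixes p :: "real poly"
  assumes "degree p \<le> CARD('n)"
  shows "\<exists>(a :: real ^ 'n::{finite,linorder}) b. \<forall>t. poly p t = a \<bullet> moment_point t + b"
proof -
  define a :: "(real, 'n) vec" where "a = (\<chi> i. coeff p (rk i))"
  have "\<forall>t. poly p t = a \<bullet> moment_point t + coeff p 0"
  proof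
    fix t :: real
    have "poly p t = (\<Sum>k\<le>degree p. coeff p k * t ^ k)" by (rule poly_altdef)
    also have "\<dots> = (\<Sum>k\<le>CARD('n). coeff p k * t ^ k)"
      by (rule sum.mono_neutral_left) (auto simp: assms coeff_eq_0)
    also have "\<dots> = coeff p 0 + (\<Sum>k\<in>{1..CARD('n)}. coeff p k * t ^ k)"
    proof -
      have "{..CARD('n)} = insert 0 {1..CARD('n)}" by auto
      then show ?thesis by simp
    qed
    also have "(\<Sum>k\<in>{1..CARD('n)}. coeff p k * t ^ k) = (\<Sum>i\<in>(UNIV::'n set). coeff p (rk i) * t ^ rk i)"
      unfolding rk_range[where 'n='n, symmetric] by (subst sum.reindex[OF rk_inj]) simp
    also have "\<dots> = a \<bullet> moment_point t" by (simp add: mp_inner a_def)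
    finally show "poly p t = a \<bullet> moment_point t + coeff p 0" by simp
  qed
  then show ?thesis by blast
qed

lemma mp_inj: "inj (moment_point :: real \<Rightarrow> (real, 'n::{finite,linorder}) vec)"
proof (rule injI)
  fix s t :: real
  assume eq: "(moment_point s :: (real, 'n) vec) = moment_point t"
  have "1 \<le> CARD('n)" by (simp add: Suc_le_eq)
  then have "1 \<in> rk ` (UNIV :: 'n set)" using rk_range[where 'n='n] by simp
  then obtain i0 :: 'n where i0: "rk i0 = 1" by auto
  have "(moment_point s :: (real, 'n) vec) $ i0 = s" "(moment_point t :: (real, 'n) vec) $ i0 = t"
    using i0 by (simp_all add: moment_point_def rk_def)
  then show "s = t" using eq by metis
qed



lemma mono_steps:
  fixes s :: "nat \<Rightarrow> real"
  assumes "\<forall>i\<le>n. s i < s (Suc i)" "i < j" "j \<le> Suc n"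
  shows "s i < s j"
  using assms(2,3)
proof (induction j)
  case 0 then show ?case by simp
next
  case (Suc j)
  show ?case
  proof (cases "i = j")
    case True then show ?thesis using assms(1) Suc by auto
  next
    case False
    then have "s i < s j" using Suc by auto
    also have "s j < s (Suc j)" using assms(1) Suc by auto
    finally show ?thesis .
  qed
qed

lemma parity_steps:
  assumes "\<forall>i\<le>n. c (s i) \<noteq> c (s (Suc i))" "i \<le> Suc n"
  shows "c (s i) = (c (s 0) = even i)"
  using assms(2)
proof (induction i)
  case 0 then show ?case by simp
next
  case (Suc i)
  then show ?case using assms(1) by auto
qed

lemma card_even_le: "card {i::nat. i \<le> Suc n \<and> even i} \<le> (n + 1) div 2 + 1"
proof -
  have "{i::nat. i \<le> Suc n \<and> even i} \<subseteq> (\<lambda>j. 2 * j) ` {..(n+1) div 2}"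
  proof
    fix i assume "i \<in> {i::nat. i \<le> Suc n \<and> even i}"
    then have "i = 2 * (i div 2)" "i div 2 \<le> (n+1) div 2" by (auto intro: div_le_mono)
    then show "i \<in> (\<lambda>j. 2 * j) ` {..(n+1) div 2}" by blast
  qed
  then have "card {i::nat. i \<le> Suc n \<and> even i} \<le> card ((\<lambda>j. 2 * j) ` {..(n+1) div 2})"
    by (intro card_mono) auto
  also have "\<dots> \<le> card {..(n+1) div 2}" by (rule card_image_le) auto
  finally show ?thesis by simp
qed

lemma card_odd_le: "card {i::nat. i \<le> Suc n \<and> odd i} \<le> (n + 1) div 2 + 1"
proof -
  have "{i::nat. i \<le> Suc n \<and> odd i} \<subseteq> (\<lambda>j. 2 * j + 1) ` {..(n+1) div 2}"
  proof
    fix i assume "i \<in> {i::nat. i \<le> Suc n \<and> odd i}"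
    then have "i = 2 * (i div 2) + 1" "i div 2 \<le> (n+1) div 2" by (auto intro: div_le_mono)
    then show "i \<in> (\<lambda>j. 2 * j + 1) ` {..(n+1) div 2}" by blast
  qed
  then have "card {i::nat. i \<le> Suc n \<and> odd i} \<le> card ((\<lambda>j. 2 * j + 1) ` {..(n+1) div 2})"
    by (intro card_mono) auto
  also have "\<dots> \<le> card {..(n+1) div 2}" by (rule card_image_le) auto
  finally show ?thesis by simp
qed

lemma roots_many:
  fixes g :: "real poly" and s :: "nat \<Rightarrow> real"
  assumes "\<forall>i\<le>n. s i < s (Suc i)"
    and "\<forall>i\<le>n. poly g (s i) * poly g (s (Suc i)) < 0"
    and "g \<noteq> 0"
  shows "Suc n \<le> degree g"
proof -
  have "\<forall>i. \<exists>r. i \<le> n \<longrightarrow> s i < r \<and> r < s (Suc i) \<and> poly g r = 0"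
    using assms(1,2) poly_IVT by blast
  then obtain r where r: "\<And>i. i \<le> n \<Longrightarrow> s i < r i \<and> r i < s (Suc i) \<and> poly g (r i) = 0"
    by metis
  have "inj_on r {..n}"
  proof (rule inj_onI)
    fix i j assume ij: "i \<in> {..n}" "j \<in> {..n}" "r i = r j"
    show "i = j"
    proof (rule ccontr)
      assume "i \<noteq> j"
      then consider "i < j" | "j < i" by linarith
      then show False
      proof cases
        case 1
        have "r i < s (Suc i)" using r ij(1,2) by auto
        also have "s (Suc i) \<le> s j"
          using mono_steps[OF assms(1), of "Suc i" j] 1 ij(1,2) by (cases "Suc i = j") auto
        also have "s j < r j" using r ij(1,2) by auto
        finally show False using ij(3) by simp
      next
        case 2
        have "r j < s (Suc j)" using r ij(1,2) by auto
        also have "s (Suc j) \<le> s i"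
          using mono_steps[OF assms(1), of "Suc j" i] 2 ij(1,2) by (cases "Suc j = i") auto
        also have "s i < r i" using r ij(1,2) by auto
        finally show False using ij(3) by simp
      qed
    qed
  qed
  moreover have "r ` {..n} \<subseteq> {x. poly g x = 0}" using r by auto
  ultimately have "card {..n} \<le> card {x. poly g x = 0}"
    using card_inj_on_le poly_roots_finite[OF assms(3)] by blast
  also have "\<dots> \<le> degree g" by (rule card_poly_roots_bound[OF assms(3)])
  finally show ?thesis by simp
qed



lemma KL:
  fixes P N :: "(real, 'n::{finite,linorder}) vec set"
  assumes PM: "P \<subseteq> moment_curve" and NM: "N \<subseteq> moment_curve" and fP: "finite P" and fN: "finite N"
    and disj: "P \<inter> N = {}" and inter: "convex hull P \<inter> convex hull N \<noteq> {}"
  shows "\<exists>P' N'. P' \<subseteq> P \<and> N' \<subseteq> N \<and> card P' \<le> (CARD('n) + 1) div 2 + 1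
            \<and> convex hull P' \<inter> convex hull N' \<noteq> {}"
proof -
  define S where "S = (moment_point :: real \<Rightarrow> (real, 'n) vec) -` (P \<union> N)"
  define c where "c = (\<lambda>t. (moment_point t :: (real, 'n) vec) \<in> P)"
  have finS: "finite S" unfolding S_def using fP fN mp_inj by (intro finite_vimageI) auto
  have "P \<noteq> {}" using inter by auto
  then obtain v where "v \<in> P" by auto
  then obtain t0 where "moment_point t0 = v" using PM unfolding moment_curve_def by auto
  then have "t0 \<in> S" using \<open>v \<in> P\<close> by (auto simp: S_def)
  then have neS: "S \<noteq> {}" by auto
  have PS: "\<exists>t\<in>S. v = moment_point t \<and> c t" if vP: "v \<in> P" for v
  proof -
    obtain t where "v = moment_point t" using PM vP unfolding moment_curve_def by auto
    then show ?thesis using vP unfolding S_def c_def by auto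
  qed
  have NS: "\<exists>t\<in>S. v = moment_point t \<and> \<not> c t" if vP: "v \<in> N" for v
  proof -
    obtain t where "v = moment_point t" using NM vP unfolding moment_curve_def by auto
    then show ?thesis using vP disj unfolding S_def c_def by auto
  qed
  from dich[OF finS neS, of "CARD('n)" c] show ?thesis
  proof
    assume "\<exists>p::real poly. degree p \<le> CARD('n) \<and> (\<forall>x\<in>S. poly p x \<noteq> 0 \<and> (0 < poly p x \<longleftrightarrow> c x))
            \<and> (\<forall>t\<le>Min S. poly p t \<noteq> 0 \<and> (0 < poly p t \<longleftrightarrow> c (Min S)))"
    then obtain p :: "real poly" where p: "degree p \<le> CARD('n)" "\<forall>x\<in>S. poly p x \<noteq> 0 \<and> (0 < poly p x \<longleftrightarrow> c x)"
      by blast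
    obtain a :: "(real, 'n) vec" and b where ab: "\<And>t. poly p t = a \<bullet> moment_point t + b"
      using poly_to_aff[OF p(1)] by blast
    have "P \<subseteq> {x. a \<bullet> x > - b}"
    proof
      fix v assume "v \<in> P"
      then obtain t where "t \<in> S" "v = moment_point t" "c t" using PS by blast
      then show "v \<in> {x. a \<bullet> x > - b}" using p(2) ab[of t] by auto
    qed
    then have H1: "convex hull P \<subseteq> {x. a \<bullet> x > - b}"
      by (intro hull_minimal convex_halfspace_gt)
    have "N \<subseteq> {x. a \<bullet> x < - b}"
    proof
      fix v assume "v \<in> N"
      then obtain t where "t \<in> S" "v = moment_point t" "\<not> c t" using NS by blast
      then have "poly p t < 0" using p(2) by force
      then show "v \<in> {x. a \<bullet> x < - b}" using ab[of t] \<open>v = moment_point t\<close> by auto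
    qed
    then have H2: "convex hull N \<subseteq> {x. a \<bullet> x < - b}"
      by (intro hull_minimal convex_halfspace_lt)
    obtain x where "x \<in> convex hull P" "x \<in> convex hull N" using inter by auto
    then have False using H1 H2 by force
    then show ?thesis ..
  next
    assume "\<exists>s. (\<forall>i\<le>CARD('n). s i < s (Suc i)) \<and> (\<forall>i\<le>Suc CARD('n). s i \<in> S)
            \<and> (\<forall>i\<le>CARD('n). c (s i) \<noteq> c (s (Suc i))) \<and> s 0 = Min S"
    then obtain s where s: "\<forall>i\<le>CARD('n). s i < s (Suc i)" "\<forall>i\<le>Suc CARD('n). s i \<in> S"
        "\<forall>i\<le>CARD('n). c (s i) \<noteq> c (s (Suc i))" by blast
    define I1 where "I1 = {i. i \<le> Suc CARD('n) \<and> c (s i)}"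
    define I0 where "I0 = {i. i \<le> Suc CARD('n) \<and> \<not> c (s i)}"
    define P' where "P' = (moment_point :: real \<Rightarrow> (real, 'n) vec) ` s ` I1"
    define N' where "N' = (moment_point :: real \<Rightarrow> (real, 'n) vec) ` s ` I0"
    have "P' \<subseteq> P" using s(2) by (auto simp: P'_def I1_def S_def c_def)
    moreover have "N' \<subseteq> N" using s(2) by (auto simp: N'_def I0_def S_def c_def)
    moreover have "card P' \<le> (CARD('n) + 1) div 2 + 1"
    proof -
      have "card P' \<le> card I1" unfolding P'_def image_image by (rule card_image_le) (simp add: I1_def)
      also have "\<dots> \<le> (CARD('n) + 1) div 2 + 1"
      proof (cases "c (s 0)")
        case True
        have "I1 = {i. i \<le> Suc CARD('n) \<and> even i}"
          using parity_steps[where c=c and s=s, OF s(3)] True by (auto simp: I1_def)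
        then show ?thesis using card_even_le by simp
      next
        case False
        have "I1 = {i. i \<le> Suc CARD('n) \<and> odd i}"
          using parity_steps[where c=c and s=s, OF s(3)] False by (auto simp: I1_def)
        then show ?thesis using card_odd_le by simp
      qed
      finally show ?thesis .
    qed
    moreover have "convex hull P' \<inter> convex hull N' \<noteq> {}"
    proof
      assume disjH: "convex hull P' \<inter> convex hull N' = {}"
      have fin': "finite P'" "finite N'" by (auto simp: P'_def N'_def I1_def I0_def)
      have "0 \<in> I1 \<or> 0 \<in> I0" "1 \<in> I1 \<or> 1 \<in> I0" by (auto simp: I1_def I0_def)
      moreover have "c (s 0) \<noteq> c (s 1)" using s(3) by auto
      ultimately have ne: "I1 \<noteq> {}" "I0 \<noteq> {}" by (auto simp: I1_def I0_def)
      have "N' \<noteq> {}" using ne by (simp add: N'_def)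
      then obtain a :: "(real, 'n) vec" and b where ab: "\<forall>x\<in>convex hull P'. a \<bullet> x < b" "\<forall>x\<in>convex hull N'. a \<bullet> x > b"
        using separating_hyperplane_closed_compact[of "convex hull P'" "convex hull N'"] disjH fin'
        by (auto simp: finite_imp_compact_convex_hull compact_imp_closed)
      obtain g :: "real poly" where g: "degree g \<le> CARD('n)" "\<And>t. poly g t = a \<bullet> moment_point t + - b"
        using aff_to_poly[of a "- b"] by blast
      have sg: "\<And>i. i \<le> Suc CARD('n) \<Longrightarrow> (c (s i) \<longrightarrow> poly g (s i) < 0) \<and> (\<not> c (s i) \<longrightarrow> poly g (s i) > 0)"
      proof -
        fix i assume i: "i \<le> Suc CARD('n)"
        show "(c (s i) \<longrightarrow> poly g (s i) < 0) \<and> (\<not> c (s i) \<longrightarrow> poly g (s i) > 0)"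
        proof (intro conjI impI)
          assume "c (s i)"
          then have "moment_point (s i) \<in> convex hull P'"
            using i by (intro hull_inc) (auto simp: P'_def I1_def)
          then show "poly g (s i) < 0" using ab(1) g(2) by auto
        next
          assume "\<not> c (s i)"
          then have "moment_point (s i) \<in> convex hull N'"
            using i by (intro hull_inc) (auto simp: N'_def I0_def)
          then show "poly g (s i) > 0" using ab(2) g(2) by auto
        qed
      qed
      have "\<forall>i\<le>CARD('n). poly g (s i) * poly g (s (Suc i)) < 0"
      proof (intro allI impI)
        fix i assume i: "i \<le> CARD('n)"
        have "c (s i) \<noteq> c (s (Suc i))" using s(3) i by auto
        then show "poly g (s i) * poly g (s (Suc i)) < 0"
          using sg[of i] sg[of "Suc i"] i by (cases "c (s i)") (auto simp: mult_neg_pos mult_pos_neg)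
      qed
      moreover have "g \<noteq> 0" using sg[of 0] by (cases "c (s 0)") auto
      ultimately have "Suc CARD('n) \<le> degree g" using roots_many[OF s(1)] by blast
      then show False using g(1) by simp
    qed
    ultimately show ?thesis by blast
  qed
qed



lemma sum_if_sub:
  assumes "finite A" "B \<subseteq> A"
  shows "(\<Sum>v\<in>A. if v \<in> B then f v else 0) = (\<Sum>v\<in>B. f v)"
proof -
  have "(\<Sum>v\<in>A. if v \<in> B then f v else 0) = sum f {v\<in>A. v \<in> B}" by (rule sum.inter_filter[OF assms(1), symmetric])
  also have "{v\<in>A. v \<in> B} = B" using assms(2) by blast
  finally show ?thesis .
qed

theorem proposition3p3:
  fixes V :: "(real, 'n::{finite,linorder}) vec set"
    and T :: "(real, 'n) vec set set"
    and \<sigma> :: "(real, 'n) vec set"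
    and k :: nat
  assumes "V \<subseteq> moment_curve" and "finite V" and "card V \<ge> card (UNIV :: 'n set) + 1"
    and "triangulation_of T (convex hull V)" and "\<Union>T \<subseteq> V"
    and "\<sigma> \<subseteq> V" and "card \<sigma> = k + 1"
    and "(card (UNIV :: 'n set) + 1) div 2 \<le> k" and "k \<le> card (UNIV :: 'n set)"
    and "\<forall>\<tau>. \<tau> \<subseteq> \<sigma> \<and> \<tau> \<noteq> {} \<and> card \<tau> \<le> (card (UNIV :: 'n set) + 1) div 2 + 1 \<longrightarrow> \<tau> \<in> T"
  shows "\<sigma> \<in> T"
proof (rule ccontr)
  assume notin: "\<sigma> \<notin> T"
  have VM: "V \<subseteq> moment_curve" and finV: "finite V" and sV: "\<sigma> \<subseteq> V" using assms by auto
  have SC: "simplicial_complex T" and cov: "\<Union>((\<lambda>\<sigma>. convex hull \<sigma>) ` T) = convex hull V"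
    using assms(4) by (auto simp: triangulation_of_def)
  have Tfin: "\<And>\<rho>. \<rho> \<in> T \<Longrightarrow> finite \<rho>" using SC by (simp add: simplicial_complex_def)
  have Tsub: "\<And>\<rho> \<rho>'. \<rho> \<in> T \<Longrightarrow> \<rho>' \<subseteq> \<rho> \<Longrightarrow> \<rho>' \<noteq> {} \<Longrightarrow> \<rho>' \<in> T"
    using SC unfolding simplicial_complex_def by blast
  have Tint: "\<And>\<rho> \<rho>'. \<rho> \<in> T \<Longrightarrow> \<rho>' \<in> T \<Longrightarrow> convex hull \<rho> \<inter> convex hull \<rho>' = convex hull (\<rho> \<inter> \<rho>')"
    using SC unfolding simplicial_complex_def by blast
  have skel: "\<And>\<rho>. \<rho> \<subseteq> \<sigma> \<Longrightarrow> \<rho> \<noteq> {} \<Longrightarrow> card \<rho> \<le> (CARD('n) + 1) div 2 + 1 \<Longrightarrow> \<rho> \<in> T"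
    using assms(10) by blast
  have fs: "finite \<sigma>" using sV finV finite_subset by blast
  have nes: "\<sigma> \<noteq> {}" using assms(7) by auto
  define n where "n = real (card \<sigma>)"
  have npos: "n > 0" using fs nes by (simp add: n_def card_gt_0_iff)
  define x where "x = (\<Sum>v\<in>\<sigma>. (1 / n) *\<^sub>R v)"
  have "x \<in> convex hull \<sigma>"
    unfolding convex_hull_finite[OF fs] x_def using npos by (auto intro!: exI[of _ "\<lambda>_. 1 / n"] simp: n_def)
  then have "x \<in> convex hull V" using hull_mono[OF sV] by blast
  then obtain \<tau>0 where t0: "\<tau>0 \<in> T" "x \<in> convex hull \<tau>0" using cov by auto
  have ft0: "finite \<tau>0" using Tfin t0 by auto
  obtain \<mu> where mu: "\<forall>v\<in>\<tau>0. 0 \<le> \<mu> v" "sum \<mu> \<tau>0 = 1" "(\<Sum>v\<in>\<tau>0. \<mu> v *\<^sub>R v) = x"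
    using t0(2) unfolding convex_hull_finite[OF ft0] by auto
  define \<tau> where "\<tau> = {v\<in>\<tau>0. \<mu> v > 0}"
  have tsub: "\<tau> \<subseteq> \<tau>0" by (auto simp: \<tau>_def)
  have ft: "finite \<tau>" using ft0 tsub finite_subset by blast
  have smu: "sum \<mu> \<tau> = 1"
  proof -
    have "sum \<mu> \<tau> = sum \<mu> \<tau>0" using mu(1) by (intro sum.mono_neutral_left[OF ft0 tsub]) (auto simp: \<tau>_def)
    then show ?thesis using mu(2) by simp
  qed
  have smux: "(\<Sum>v\<in>\<tau>. \<mu> v *\<^sub>R v) = x"
  proof -
    have "(\<Sum>v\<in>\<tau>. \<mu> v *\<^sub>R v) = (\<Sum>v\<in>\<tau>0. \<mu> v *\<^sub>R v)"
      using mu(1) by (intro sum.mono_neutral_left[OF ft0 tsub]) (auto simp: \<tau>_def)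
    then show ?thesis using mu(3) by simp
  qed
  have net: "\<tau> \<noteq> {}" using smu by auto
  have tT: "\<tau> \<in> T" using Tsub[OF t0(1) tsub net] .
  have mupos: "\<And>v. v \<in> \<tau> \<Longrightarrow> \<mu> v > 0" by (auto simp: \<tau>_def)
  have neq: "\<sigma> \<noteq> \<tau>" using notin tT by auto
  define W where "W = \<sigma> \<union> \<tau>"
  have fW: "finite W" using fs ft by (simp add: W_def)
  define w where "w = (\<lambda>v. (if v \<in> \<sigma> then 1 / n else 0) - (if v \<in> \<tau> then \<mu> v else 0))"
  have sumw: "(\<Sum>v\<in>W. w v) = 0"
  proof -
    have a: "(\<Sum>v\<in>W. (if v \<in> \<sigma> then 1 / n else 0)) = (\<Sum>v\<in>\<sigma>. 1 / n)"
      using sum_if_sub[OF fW, of \<sigma> "\<lambda>_. 1 / n"] by (simp add: W_def)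
    have b: "(\<Sum>v\<in>W. (if v \<in> \<tau> then \<mu> v else 0)) = (\<Sum>v\<in>\<tau>. \<mu> v)"
      using sum_if_sub[OF fW, of \<tau> \<mu>] by (simp add: W_def)
    have "(\<Sum>v\<in>\<sigma>. 1 / n) = 1" using npos by (simp add: n_def)
    then show ?thesis using a b smu by (simp add: w_def sum_subtractf)
  qed
  have sumwv: "(\<Sum>v\<in>W. w v *\<^sub>R v) = 0"
  proof -
    have a: "(\<Sum>v\<in>W. (if v \<in> \<sigma> then 1 / n else 0) *\<^sub>R v) = (\<Sum>v\<in>\<sigma>. (1 / n) *\<^sub>R v)"
    proof -
      have "(\<Sum>v\<in>W. (if v \<in> \<sigma> then 1 / n else 0) *\<^sub>R v) = (\<Sum>v\<in>W. if v \<in> \<sigma> then (1 / n) *\<^sub>R v else 0)"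
        by (rule sum.cong) auto
      also have "\<dots> = (\<Sum>v\<in>\<sigma>. (1 / n) *\<^sub>R v)" by (rule sum_if_sub[OF fW]) (auto simp: W_def)
      finally show ?thesis .
    qed
    have b: "(\<Sum>v\<in>W. (if v \<in> \<tau> then \<mu> v else 0) *\<^sub>R v) = (\<Sum>v\<in>\<tau>. \<mu> v *\<^sub>R v)"
    proof -
      have "(\<Sum>v\<in>W. (if v \<in> \<tau> then \<mu> v else 0) *\<^sub>R v) = (\<Sum>v\<in>W. if v \<in> \<tau> then \<mu> v *\<^sub>R v else 0)"
        by (rule sum.cong) auto
      also have "\<dots> = (\<Sum>v\<in>\<tau>. \<mu> v *\<^sub>R v)" by (rule sum_if_sub[OF fW]) (auto simp: W_def)
      finally show ?thesis .
    qed
    have "(\<Sum>v\<in>W. w v *\<^sub>R v) = (\<Sum>v\<in>W. (if v \<in> \<sigma> then 1 / n else 0) *\<^sub>R v) - (\<Sum>v\<in>W. (if v \<in> \<tau> then \<mu> v else 0) *\<^sub>R v)"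
      by (simp add: w_def scaleR_diff_left sum_subtractf)
    then show ?thesis using a b smux x_def by simp
  qed
  define P where "P = {v\<in>W. w v > 0}"
  define N where "N = {v\<in>W. w v < 0}"
  have PN: "P \<inter> N = {}" by (auto simp: P_def N_def)
  have fP: "finite P" "finite N" using fW by (auto simp: P_def N_def)
  have Psub: "P \<subseteq> \<sigma>"
  proof
    fix v assume "v \<in> P"
    then show "v \<in> \<sigma>" using mupos[of v] by (auto simp: P_def w_def split: if_splits)
  qed
  have Nsub: "N \<subseteq> \<tau>"
  proof
    fix v assume "v \<in> N"
    then show "v \<in> \<tau>" using npos by (auto simp: N_def w_def split: if_splits)
  qed
  have split: "(\<Sum>v\<in>W. f v) = (\<Sum>v\<in>P. f v) + (\<Sum>v\<in>N. f v)" if f0: "\<And>v. w v = 0 \<Longrightarrow> f v = 0"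
    for f :: "_ \<Rightarrow> 'b::comm_monoid_add"
  proof -
    have "P \<union> N \<subseteq> W" by (auto simp: P_def N_def)
    then have "(\<Sum>v\<in>W. f v) = (\<Sum>v\<in>P \<union> N. f v)"
    proof (rule sum.mono_neutral_right[OF fW], intro ballI)
      fix v assume v: "v \<in> W - (P \<union> N)"
      then have "\<not> w v > 0" "\<not> w v < 0" by (auto simp: P_def N_def)
      then have "w v = 0" by linarith
      then show "f v = 0" by (rule f0)
    qed
    also have "\<dots> = (\<Sum>v\<in>P. f v) + (\<Sum>v\<in>N. f v)" by (rule sum.union_disjoint[OF fP PN])
    finally show ?thesis .
  qed
  define sP where "sP = (\<Sum>v\<in>P. w v)"
  define sN where "sN = (\<Sum>v\<in>N. - w v)"
  have "sP - sN = 0" using split[of w] sumw by (simp add: sP_def sN_def sum_negf)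
  then have sPN: "sP = sN" by simp
  have "(\<Sum>v\<in>P. w v *\<^sub>R v) + (\<Sum>v\<in>N. w v *\<^sub>R v) = 0" using split[of "\<lambda>v. w v *\<^sub>R v"] sumwv by simp
  then have vPN: "(\<Sum>v\<in>P. w v *\<^sub>R v) = (\<Sum>v\<in>N. (- w v) *\<^sub>R v)"
    by (simp add: sum_negf eq_neg_iff_add_eq_0)
  have "\<exists>v\<in>W. w v \<noteq> 0"
  proof -
    obtain v where "v \<in> \<sigma> - \<tau> \<or> v \<in> \<tau> - \<sigma>" using neq by blast
    then show ?thesis using npos mupos[of v] by (auto simp: W_def w_def)
  qed
  then obtain v0 where "v0 \<in> P \<or> v0 \<in> N" by (auto simp: P_def N_def linorder_neq_iff)
  then have "sP > 0 \<or> sN > 0"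
  proof
    assume "v0 \<in> P"
    then have "sP > 0" unfolding sP_def using fP
      by (intro sum_pos2[of P v0]) (auto simp: P_def less_imp_le)
    then show ?thesis ..
  next
    assume "v0 \<in> N"
    then have "sN > 0" unfolding sN_def using fP
      by (intro sum_pos2[of N v0]) (auto simp: N_def less_imp_le)
    then show ?thesis ..
  qed
  then have sPpos: "sP > 0" using sPN by auto
  define y where "y = (1 / sP) *\<^sub>R (\<Sum>v\<in>P. w v *\<^sub>R v)"
  have yP: "y \<in> convex hull P"
  proof -
    have "(\<Sum>v\<in>P. (w v / sP) *\<^sub>R v) = (\<Sum>v\<in>P. (1 / sP) *\<^sub>R (w v *\<^sub>R v))"
      by (rule sum.cong) auto
    also have "\<dots> = y" unfolding y_def by (rule scaleR_sum_right[symmetric])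
    finally have "(\<Sum>v\<in>P. (w v / sP) *\<^sub>R v) = y" .
    moreover have "(\<Sum>v\<in>P. w v / sP) = 1"
    proof -
      have "(\<Sum>v\<in>P. w v / sP) = sP / sP" unfolding sP_def by (rule sum_divide_distrib[symmetric])
      then show ?thesis using sPpos by simp
    qed
    moreover have "\<forall>v\<in>P. 0 \<le> w v / sP" using sPpos by (auto simp: P_def)
    ultimately show ?thesis unfolding convex_hull_finite[OF fP(1)] mem_Collect_eq
      by (intro exI[of _ "\<lambda>v. w v / sP"]) simp
  qed
  have yN: "y \<in> convex hull N"
  proof -
    have "(\<Sum>v\<in>N. (- w v / sN) *\<^sub>R v) = (\<Sum>v\<in>N. (1 / sN) *\<^sub>R ((- w v) *\<^sub>R v))"
      by (rule sum.cong) auto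
    also have "\<dots> = (1 / sN) *\<^sub>R (\<Sum>v\<in>N. (- w v) *\<^sub>R v)" by (rule scaleR_sum_right[symmetric])
    also have "\<dots> = y" unfolding y_def using vPN sPN by simp
    finally have "(\<Sum>v\<in>N. (- w v / sN) *\<^sub>R v) = y" .
    moreover have "(\<Sum>v\<in>N. - w v / sN) = 1"
    proof -
      have "(\<Sum>v\<in>N. - w v / sN) = sN / sN" unfolding sN_def by (rule sum_divide_distrib[symmetric])
      then show ?thesis using sPpos sPN by simp
    qed
    moreover have "\<forall>v\<in>N. 0 \<le> - w v / sN" using sPpos sPN by (auto simp: N_def divide_nonpos_pos)
    ultimately show ?thesis unfolding convex_hull_finite[OF fP(2)] mem_Collect_eq
      by (intro exI[of _ "\<lambda>v. - w v / sN"]) simp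
  qed
  have "P \<subseteq> moment_curve" "N \<subseteq> moment_curve"
    using Psub Nsub sV VM assms(5) tT by blast+
  then obtain P' N' where PN': "P' \<subseteq> P" "N' \<subseteq> N" "card P' \<le> (CARD('n) + 1) div 2 + 1"
      "convex hull P' \<inter> convex hull N' \<noteq> {}"
    using KL[OF _ _ fP PN] yP yN by blast
  have neP': "P' \<noteq> {}" "N' \<noteq> {}" using PN'(4) by auto
  have "P' \<in> T" using skel[OF _ neP'(1) PN'(3)] PN'(1) Psub by blast
  moreover have "N' \<in> T" using Tsub[OF tT _ neP'(2)] PN'(2) Nsub by blast
  ultimately have "convex hull P' \<inter> convex hull N' = convex hull (P' \<inter> N')" using Tint by blast
  moreover have "P' \<inter> N' = {}" using PN PN'(1,2) by blast
  ultimately show False using PN'(4) by simp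
qed

end
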